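(* Let $d\ge1$, $N\ge1$, $T>0$, let $\mathcal{K}:\mathbb{R}^d\to\mathbb{R}^d$ be Lipschitz continuous and compactly supported in $B_R(0)$, and for $\alpha,\beta\in\mathbb{R}$ let $K^N_{\alpha,\beta}(z)=N^{-\alpha}\mathcal{K}(z/N^\beta)$. Assume the desired velocity vanishes, $v_\textup{d}\equiv0$. Let $\alpha,\beta,\alpha',\beta'\in\mathbb{R}$ with $\alpha+\beta=\alpha'+\beta'$, let $U^N(z)=N^{\beta'-\beta}z$, and let $\mu^N_\cdot,\nu^N_\cdot\in C([0,T];\mathcal{M}^N_1(\mathbb{R}^d))$ be the solutions of the Cauchy problem with interaction kernels $K^N_{\alpha,\beta}$ and $K^N_{\alpha',\beta'}$ respectively, and initial data $\bar\mu^N$ and $\bar\nu^N=U^N\#\bar\mu^N$ in $\mathcal{M}^N_1(\mathbb{R}^d)$. Then $\nu^N_t=U^N\#\mu^N_t$ for all $t\in(0,T]$.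
   Context: $\mathcal{M}^N_1(\mathbb{R}^d)$ is the set of positive Borel measures on $\mathbb{R}^d$ with total mass $N$ and finite first moment; $\#$ denotes push-forward. With interaction kernel $K$ and $v_\textup{d}\equiv0$, the velocity is $v[\mu](x)=-\int K(y-x)\,d\mu(y)$. A solution of the Cauchy problem $\partial_t\mu_t+\nabla\cdot(\mu_tv[\mu_t])=0$, $\mu_0=\bar\mu$, on $[0,T]$ is a curve $\mu_\cdot\in C([0,T];\mathcal{M}^N_1(\mathbb{R}^d))$ given by $\mu_t=\gamma_t\#\bar\mu$, where the flow map satisfies $\gamma_t(x)=x+\int_0^tv[\mu_s](\gamma_s(x))\,ds$. *)

theory Defs
  imports "HOL-Analysis.Analysis"
begin

definition meas_N1 :: "nat \<Rightarrow> 'a::euclidean_space measure set" where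
  "meas_N1 N = {\<mu>. sets \<mu> = sets borel \<and> emeasure \<mu> (space \<mu>) = of_nat N
                  \<and> integrable \<mu> (\<lambda>x. norm x)}"

text \<open>Wasserstein-1 distance (for equal masses) via Kantorovich--Rubinstein duality.\<close>
definition W1 :: "'a::euclidean_space measure \<Rightarrow> 'a measure \<Rightarrow> real" where
  "W1 \<mu> \<nu> = (SUP f \<in> {f :: 'a \<Rightarrow> real. 1-lipschitz_on UNIV f}.
                 integral\<^sup>L \<mu> f - integral\<^sup>L \<nu> f)"

definition cont_curve :: "real \<Rightarrow> nat \<Rightarrow> (real \<Rightarrow> 'a::euclidean_space measure) \<Rightarrow> bool" where
  "cont_curve T N \<mu> \<longleftrightarrow> (\<forall>t\<in>{0..T}. \<mu> t \<in> meas_N1 N) \<and>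
     (\<forall>t\<in>{0..T}. ((\<lambda>s. W1 (\<mu> s) (\<mu> t)) \<longlongrightarrow> 0) (at t within {0..T}))"

text \<open>Velocity field v[mu](x) = - int K(y - x) d mu(y) (desired velocity zero).\<close>
definition vel :: "('a::euclidean_space \<Rightarrow> 'a) \<Rightarrow> 'a measure \<Rightarrow> 'a \<Rightarrow> 'a" where
  "vel K \<mu> x = - integral\<^sup>L \<mu> (\<lambda>y. K (y - x))"

definition is_solution ::
  "real \<Rightarrow> nat \<Rightarrow> ('a::euclidean_space \<Rightarrow> 'a) \<Rightarrow> 'a measure \<Rightarrow> (real \<Rightarrow> 'a measure) \<Rightarrow> bool" where
  "is_solution T N K \<mu>0 \<mu> \<longleftrightarrow> cont_curve T N \<mu> \<and>
     (\<exists>\<gamma> :: real \<Rightarrow> 'a \<Rightarrow> 'a.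
        (\<forall>t\<in>{0..T}. \<gamma> t \<in> borel_measurable borel \<and> \<mu> t = distr \<mu>0 borel (\<gamma> t)) \<and>
        (\<forall>t\<in>{0..T}. \<forall>x. (\<lambda>s. vel K (\<mu> s) (\<gamma> s x)) integrable_on {0..t} \<and>
                         \<gamma> t x = x + integral {0..t} (\<lambda>s. vel K (\<mu> s) (\<gamma> s x))))"

definition scaled_kernel :: "('a::euclidean_space \<Rightarrow> 'a) \<Rightarrow> nat \<Rightarrow> real \<Rightarrow> real \<Rightarrow> 'a \<Rightarrow> 'a" where
  "scaled_kernel K N \<alpha> \<beta> z = (real N powr (-\<alpha>)) *\<^sub>R K ((1 / real N powr \<beta>) *\<^sub>R z)"

end

theory Submission
  imports Defs
begin


lemma poly_int:
  fixes c :: real and n :: nat assumes "0 \<le> t"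
  shows "((\<lambda>s. c * s ^ n) has_integral (c * t ^ Suc n / Suc n)) {0..t}"
proof -
  have "((\<lambda>s. c * s ^ n) has_integral ((\<lambda>s. c * s ^ Suc n / Suc n) t - (\<lambda>s. c * s ^ Suc n / Suc n) 0)) {0..t}"
    apply (rule fundamental_theorem_of_calculus[OF assms])
    apply (auto intro!: derivative_eq_intros simp: has_real_derivative_iff_has_vector_derivative[symmetric] simp del: of_nat_Suc)
    apply (cases n) apply (auto simp: field_simps)
    done
  then show ?thesis by simp
qed

lemma core_est:
  fixes K :: "'a::euclidean_space \<Rightarrow> 'a" and \<mu>0 :: "'a measure" and g h :: "'a \<Rightarrow> 'a"
  assumes Klip: "Lk-lipschitz_on UNIV K" and Kb: "\<And>z. norm (K z) \<le> B"
    and fm: "finite_measure \<mu>0" and sb: "sets \<mu>0 = sets borel"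
    and mg: "g \<in> borel_measurable borel" and mh: "h \<in> borel_measurable borel"
    and D: "\<And>y. norm (g y - h y) \<le> D"
  shows "norm ((LINT y|\<mu>0. K (g y - g x)) - (LINT y|\<mu>0. K (h y - h x))) \<le> 2 * Lk * measure \<mu>0 (space \<mu>0) * D"
proof -
  interpret finite_measure \<mu>0 by fact
  have Km: "K \<in> borel_measurable borel"
    by (rule borel_measurable_continuous_onI[OF lipschitz_on_continuous_on[OF Klip]])
  have mg': "g \<in> borel_measurable \<mu>0" and mh': "h \<in> borel_measurable \<mu>0"
    using mg mh measurable_cong_sets[OF sb refl] by auto
  have ig: "integrable \<mu>0 (\<lambda>y. K (g y - z))" for z
    by (rule integrable_const_bound[where B=B]) (use Kb Km mg' in auto)
  have ih: "integrable \<mu>0 (\<lambda>y. K (h y - z))" for z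
    by (rule integrable_const_bound[where B=B]) (use Kb Km mh' in auto)
  have L0: "0 \<le> Lk" using lipschitz_on_nonneg[OF Klip] .
  have "(LINT y|\<mu>0. K (g y - g x)) - (LINT y|\<mu>0. K (h y - h x)) = (LINT y|\<mu>0. K (g y - g x) - K (h y - h x))"
    using ig ih by simp
  also have "norm \<dots> \<le> (LINT y|\<mu>0. 2 * Lk * D)"
  proof (rule Bochner_Integration.integral_norm_bound_integral)
    show "integrable \<mu>0 (\<lambda>y. K (g y - g x) - K (h y - h x))" using ig ih by simp
    show "integrable \<mu>0 (\<lambda>y. 2 * Lk * D)" by simp
    fix y
    have "norm (K (g y - g x) - K (h y - h x)) \<le> Lk * norm ((g y - g x) - (h y - h x))"
      by (rule lipschitz_on_normD[OF Klip]) auto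
    also have "norm ((g y - g x) - (h y - h x)) \<le> norm (g y - h y) + norm (g x - h x)"
      by (metis diff_diff_eq2 diff_add_eq norm_triangle_ineq4 add_diff_eq diff_diff_add)
    also have "\<dots> \<le> 2 * D" using D[of y] D[of x] by simp
    finally show "norm (K (g y - g x) - K (h y - h x)) \<le> 2 * Lk * D"
      using L0 by (simp add: mult_left_mono)
  qed
  finally show ?thesis by (simp add: mult_ac)
qed

lemma int_bound:
  fixes K :: "'a::euclidean_space \<Rightarrow> 'a" and \<mu>0 :: "'a measure" and g :: "'a \<Rightarrow> 'a"
  assumes Klip: "Lk-lipschitz_on UNIV K" and Kb: "\<And>z. norm (K z) \<le> B"
    and fm: "finite_measure \<mu>0" and sb: "sets \<mu>0 = sets borel"
    and mg: "g \<in> borel_measurable borel"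
  shows "norm (LINT y|\<mu>0. K (g y - z)) \<le> B * measure \<mu>0 (space \<mu>0)"
proof -
  interpret finite_measure \<mu>0 by fact
  have Km: "K \<in> borel_measurable borel"
    by (rule borel_measurable_continuous_onI[OF lipschitz_on_continuous_on[OF Klip]])
  have mg': "g \<in> borel_measurable \<mu>0"
    using mg measurable_cong_sets[OF sb refl] by auto
  have ig: "integrable \<mu>0 (\<lambda>y. K (g y - z))"
    by (rule integrable_const_bound[where B=B]) (use Kb Km mg' in auto)
  have "norm (LINT y|\<mu>0. K (g y - z)) \<le> (LINT y|\<mu>0. B)"
    by (rule Bochner_Integration.integral_norm_bound_integral) (use ig Kb in auto)
  then show ?thesis by (simp add: mult_ac)
qed


lemma uniq:
  fixes K :: "'a::euclidean_space \<Rightarrow> 'a" and \<mu>0 :: "'a measure" and a b :: "real \<Rightarrow> 'a \<Rightarrow> 'a"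
    and p :: "'a \<Rightarrow> 'a"
  assumes Klip: "Lk-lipschitz_on UNIV K" and Kb: "\<And>z. norm (K z) \<le> B"
    and fm: "finite_measure \<mu>0" and sb: "sets \<mu>0 = sets borel"
    and ma: "\<And>s. s \<in> {0..T} \<Longrightarrow> a s \<in> borel_measurable borel"
    and mb: "\<And>s. s \<in> {0..T} \<Longrightarrow> b s \<in> borel_measurable borel"
    and ia: "\<And>t x. t \<in> {0..T} \<Longrightarrow> (\<lambda>s. - (LINT y|\<mu>0. K (a s y - a s x))) integrable_on {0..t}"
    and ea: "\<And>t x. t \<in> {0..T} \<Longrightarrow> a t x = p x + integral {0..t} (\<lambda>s. - (LINT y|\<mu>0. K (a s y - a s x)))"
    and ib: "\<And>t x. t \<in> {0..T} \<Longrightarrow> (\<lambda>s. - (LINT y|\<mu>0. K (b s y - b s x))) integrable_on {0..t}"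
    and eb: "\<And>t x. t \<in> {0..T} \<Longrightarrow> b t x = p x + integral {0..t} (\<lambda>s. - (LINT y|\<mu>0. K (b s y - b s x)))"
    and t: "t \<in> {0..T}"
  shows "a t x = b t x"
proof -
  define fa where "fa s x = - (LINT y|\<mu>0. K (a s y - a s x))" for s x
  define fb where "fb s x = - (LINT y|\<mu>0. K (b s y - b s x))" for s x
  define m where "m = measure \<mu>0 (space \<mu>0)"
  define k where "k = 2 * Lk * m"
  define M where "M = 2 * B * m * T"
  have m0: "0 \<le> m" unfolding m_def by simp
  have L0: "0 \<le> Lk" using lipschitz_on_nonneg[OF Klip] .
  have B0: "0 \<le> B" using Kb[of 0] norm_ge_zero[of "K 0"] by linarith
  have k0: "0 \<le> k" unfolding k_def using m0 L0 by simp
  have i1: "(\<lambda>s. fa s x) integrable_on {0..t}" if "t \<in> {0..T}" for t x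
    unfolding fa_def using ia[OF that] .
  have i2: "(\<lambda>s. fb s x) integrable_on {0..t}" if "t \<in> {0..T}" for t x
    unfolding fb_def using ib[OF that] .
  have e1: "a t x = p x + integral {0..t} (\<lambda>s. fa s x)" if "t \<in> {0..T}" for t x
    unfolding fa_def using ea[OF that] .
  have e2: "b t x = p x + integral {0..t} (\<lambda>s. fb s x)" if "t \<in> {0..T}" for t x
    unfolding fb_def using eb[OF that] .
  have dif: "a t x - b t x = integral {0..t} (\<lambda>s. fa s x - fb s x)" if "t \<in> {0..T}" for t x
    unfolding e1[OF that] e2[OF that] integral_diff[OF i1[OF that] i2[OF that]] by simp
  have idif: "(\<lambda>s. fa s x - fb s x) integrable_on {0..t}" if "t \<in> {0..T}" for t x
    by (rule integrable_diff[OF i1[OF that] i2[OF that]])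
  have base: "norm (a t x - b t x) \<le> M" if "t \<in> {0..T}" for t x
  proof -
    have "norm (a t x - b t x) \<le> integral {0..t} (\<lambda>s. 2 * B * m)"
      unfolding dif[OF that]
    proof (rule Henstock_Kurzweil_Integration.integral_norm_bound_integral[OF idif[OF that]])
      show "(\<lambda>s. 2 * B * m) integrable_on {0..t}" by (rule integrable_const_ivl)
      fix s assume s: "s \<in> {0..t}"
      then have sT: "s \<in> {0..T}" using that by auto
      have "norm (fa s x) \<le> B * m" unfolding fa_def m_def norm_minus_cancel
        by (rule int_bound[OF Klip Kb fm sb ma[OF sT]])
      moreover have "norm (fb s x) \<le> B * m" unfolding fb_def m_def norm_minus_cancel
        by (rule int_bound[OF Klip Kb fm sb mb[OF sT]])
      ultimately show "norm (fa s x - fb s x) \<le> 2 * B * m"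
        using norm_triangle_ineq4[of "fa s x" "fb s x"] by linarith
    qed
    also have "\<dots> = 2 * B * m * t" using that by simp
    also have "\<dots> \<le> M" unfolding M_def using that B0 m0 by (simp add: mult_left_mono)
    finally show ?thesis .
  qed
  have ind: "\<forall>t\<in>{0..T}. \<forall>x. norm (a t x - b t x) \<le> M * (k * t) ^ n / fact n" for n
  proof (induction n)
    case 0 then show ?case using base by simp
  next
    case (Suc n)
    show ?case
    proof (intro ballI allI)
      fix t x assume tT: "t \<in> {0..T}"
      have "norm (a t x - b t x) \<le> integral {0..t} (\<lambda>s. M * k ^ Suc n / fact n * s ^ n)"
        unfolding dif[OF tT]
      proof (rule Henstock_Kurzweil_Integration.integral_norm_bound_integral[OF idif[OF tT]])
        show "(\<lambda>s. M * k ^ Suc n / fact n * s ^ n) integrable_on {0..t}"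
          using poly_int[of t "M * k ^ Suc n / fact n" n] tT by auto
        fix s assume s: "s \<in> {0..t}"
        then have sT: "s \<in> {0..T}" using tT by auto
        have "norm (fa s x - fb s x) = norm ((LINT y|\<mu>0. K (a s y - a s x)) - (LINT y|\<mu>0. K (b s y - b s x)))"
          unfolding fa_def fb_def by (simp add: norm_minus_commute)
        also have "\<dots> \<le> 2 * Lk * measure \<mu>0 (space \<mu>0) * (M * (k * s) ^ n / fact n)"
          by (rule core_est[OF Klip Kb fm sb ma[OF sT] mb[OF sT]]) (use Suc sT in auto)
        also have "\<dots> = M * k ^ Suc n / fact n * s ^ n"
          unfolding m_def[symmetric] mult.assoc[of 2] k_def[symmetric, unfolded mult.assoc] by (simp add: power_mult_distrib mult_ac)
        finally show "norm (fa s x - fb s x) \<le> M * k ^ Suc n / fact n * s ^ n" .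
      qed
      also have "\<dots> = M * k ^ Suc n / fact n * t ^ Suc n / Suc n"
        using poly_int[of t "M * k ^ Suc n / fact n" n] tT by (auto dest: integral_unique)
      also have "\<dots> = M * (k * t) ^ Suc n / fact (Suc n)"
        by (simp add: power_mult_distrib divide_simps del: of_nat_Suc)
      finally show "norm (a t x - b t x) \<le> M * (k * t) ^ Suc n / fact (Suc n)" .
    qed
  qed
  have "(\<lambda>n. inverse (fact n) * (k * t) ^ n) \<longlonglongrightarrow> 0"
    by (rule summable_LIMSEQ_zero[OF summable_exp])
  have lim: "(\<lambda>n. M * (k * t) ^ n / fact n) \<longlonglongrightarrow> 0"
  proof -
    have "(\<lambda>n. M * (inverse (fact n) * (k * t) ^ n)) \<longlonglongrightarrow> 0"
      by (rule tendsto_mult_right_zero) fact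
    then show ?thesis by (simp add: divide_inverse mult_ac)
  qed
  have "norm (a t x - b t x) \<le> 0"
    by (rule tendsto_le[OF trivial_limit_sequentially lim tendsto_const]) (use ind t in \<open>simp add: eventually_sequentially\<close>)
  then show ?thesis by simp
qed

lemma lip_bound:
  fixes Kc :: "'a::euclidean_space \<Rightarrow> 'a"
  assumes "L-lipschitz_on UNIV Kc" and "\<forall>z. z \<notin> ball 0 R \<longrightarrow> Kc z = 0" and "0 < R"
  shows "norm (Kc z) \<le> norm (Kc 0) + L * R"
proof (cases "z \<in> ball 0 R")
  case True
  have L0: "0 \<le> L" using lipschitz_on_nonneg[OF assms(1)] .
  have "norm (Kc z - Kc 0) \<le> L * norm (z - 0)" by (rule lipschitz_on_normD[OF assms(1)]) auto
  moreover have "L * norm z \<le> L * R" using True L0 by (intro mult_left_mono) auto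
  ultimately show ?thesis using norm_triangle_ineq2[of "Kc z" "Kc 0"] by auto
next
  case False
  then have "Kc z = 0" using assms(2) by auto
  moreover have "0 \<le> R" using assms(3) by simp
  ultimately show ?thesis using lipschitz_on_nonneg[OF assms(1)] by simp
qed

lemma scaled_lip:
  fixes Kc :: "'a::euclidean_space \<Rightarrow> 'a"
  assumes "L-lipschitz_on UNIV Kc" "0 < c"
  shows "(\<bar>a\<bar> * L * (1 / c))-lipschitz_on UNIV (\<lambda>z. a *\<^sub>R Kc ((1 / c) *\<^sub>R z))"
proof (rule lipschitz_onI)
  have L0: "0 \<le> L" using lipschitz_on_nonneg[OF assms(1)] .
  show "0 \<le> \<bar>a\<bar> * L * (1 / c)" using L0 assms(2) by simp
  fix x y :: 'a
  have "dist (Kc ((1 / c) *\<^sub>R x)) (Kc ((1 / c) *\<^sub>R y)) \<le> L * dist ((1 / c) *\<^sub>R x) ((1 / c) *\<^sub>R y)"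
    by (rule lipschitz_onD[OF assms(1)]) auto
  also have "dist ((1 / c) *\<^sub>R x) ((1 / c) *\<^sub>R y) = (1 / c) * dist x y"
    using assms(2) by (simp add: dist_norm flip: scaleR_diff_right)
  finally have h: "dist (Kc ((1 / c) *\<^sub>R x)) (Kc ((1 / c) *\<^sub>R y)) \<le> L * (1 / c) * dist x y" by simp
  have "dist (a *\<^sub>R Kc ((1 / c) *\<^sub>R x)) (a *\<^sub>R Kc ((1 / c) *\<^sub>R y))
     = \<bar>a\<bar> * dist (Kc ((1 / c) *\<^sub>R x)) (Kc ((1 / c) *\<^sub>R y))"
    by (simp add: dist_norm flip: scaleR_diff_right)
  also have "\<dots> \<le> \<bar>a\<bar> * (L * (1 / c) * dist x y)" using h by (intro mult_left_mono) auto
  finally show "dist (a *\<^sub>R Kc ((1 / c) *\<^sub>R x)) (a *\<^sub>R Kc ((1 / c) *\<^sub>R y)) \<le> \<bar>a\<bar> * L * (1 / c) * dist x y"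
    by (simp add: mult_ac)
qed

theorem mainTheorem7:
  fixes Kc :: "'a::euclidean_space \<Rightarrow> 'a"
    and N :: nat and T R L \<alpha> \<beta> \<alpha>' \<beta>' :: real
    and \<mu>0 :: "'a measure" and \<mu> \<nu> :: "real \<Rightarrow> 'a measure"
  assumes "N \<ge> 1" and "T > 0"
    and "L-lipschitz_on UNIV Kc"
    and "R > 0" and "\<forall>z. z \<notin> ball 0 R \<longrightarrow> Kc z = 0"
    and "\<alpha> + \<beta> = \<alpha>' + \<beta>'"
    and "\<mu>0 \<in> meas_N1 N"
    and "distr \<mu>0 borel (\<lambda>z. (real N powr (\<beta>' - \<beta>)) *\<^sub>R z) \<in> meas_N1 N"
    and "is_solution T N (scaled_kernel Kc N \<alpha> \<beta>) \<mu>0 \<mu>"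
    and "is_solution T N (scaled_kernel Kc N \<alpha>' \<beta>')
           (distr \<mu>0 borel (\<lambda>z. (real N powr (\<beta>' - \<beta>)) *\<^sub>R z)) \<nu>"
  shows "\<forall>t\<in>{0<..T}. \<nu> t = distr (\<mu> t) borel (\<lambda>z. (real N powr (\<beta>' - \<beta>)) *\<^sub>R z)"
proof -
  define c where "c = real N powr (\<beta>' - \<beta>)"
  define U where "U = (\<lambda>z::'a. c *\<^sub>R z)"
  define \<mu>0' where "\<mu>0' = distr \<mu>0 borel U"
  define K1 where "K1 = scaled_kernel Kc N \<alpha> \<beta>"
  define K2 where "K2 = scaled_kernel Kc N \<alpha>' \<beta>'"
  have Npos: "0 < real N" using assms(1) by simp
  have cpos: "0 < c" unfolding c_def using Npos by simp
  have sb: "sets \<mu>0 = sets borel" using assms(7) by (simp add: meas_N1_def)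
  have fm: "finite_measure \<mu>0" using assms(7) by (intro finite_measureI) (simp add: meas_N1_def)
  have sb': "sets \<mu>0' = sets borel" unfolding \<mu>0'_def by simp
  have Um: "U \<in> borel_measurable borel" unfolding U_def by simp
  have Um0: "U \<in> measurable \<mu>0 borel" unfolding measurable_cong_sets[OF sb refl] by (rule Um)
  obtain \<gamma> where g1: "\<forall>t\<in>{0..T}. \<gamma> t \<in> borel_measurable borel \<and> \<mu> t = distr \<mu>0 borel (\<gamma> t)"
    and g2: "\<forall>t\<in>{0..T}. \<forall>x. (\<lambda>s. vel K1 (\<mu> s) (\<gamma> s x)) integrable_on {0..t} \<and>
                         \<gamma> t x = x + integral {0..t} (\<lambda>s. vel K1 (\<mu> s) (\<gamma> s x))"
    using assms(9) unfolding is_solution_def K1_def by blast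
  obtain \<eta> where h1: "\<forall>t\<in>{0..T}. \<eta> t \<in> borel_measurable borel \<and> \<nu> t = distr \<mu>0' borel (\<eta> t)"
    and h2: "\<forall>t\<in>{0..T}. \<forall>x. (\<lambda>s. vel K2 (\<nu> s) (\<eta> s x)) integrable_on {0..t} \<and>
                         \<eta> t x = x + integral {0..t} (\<lambda>s. vel K2 (\<nu> s) (\<eta> s x))"
    using assms(10) unfolding is_solution_def K2_def \<mu>0'_def U_def c_def by blast
  define B0 where "B0 = norm (Kc 0) + L * R"
  have Kcb: "norm (Kc z) \<le> B0" for z unfolding B0_def by (rule lip_bound[OF assms(3) assms(5) assms(4)])
  have K2eq: "K2 = (\<lambda>z. (real N powr (-\<alpha>')) *\<^sub>R Kc ((1 / real N powr \<beta>') *\<^sub>R z))"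
    unfolding K2_def scaled_kernel_def by (rule ext) simp
  have K2lip: "(\<bar>real N powr (-\<alpha>')\<bar> * L * (1 / real N powr \<beta>'))-lipschitz_on UNIV K2"
    unfolding K2eq by (rule scaled_lip[OF assms(3)]) (use Npos in simp)
  have K2b: "norm (K2 z) \<le> real N powr (-\<alpha>') * B0" for z
    unfolding K2eq using Kcb by (simp add: mult_left_mono)
  have K2m: "K2 \<in> borel_measurable borel"
    by (rule borel_measurable_continuous_onI[OF lipschitz_on_continuous_on[OF K2lip]])
  have K1m: "K1 \<in> borel_measurable borel"
    unfolding K1_def scaled_kernel_def
    by (intro borel_measurable_continuous_onI continuous_intros
        lipschitz_on_continuous_on[OF assms(3), THEN continuous_on_compose2]) auto
  have velA: "vel K2 (\<nu> s) z = - (LINT y|\<mu>0. K2 (\<eta> s (U y) - z))" if "s \<in> {0..T}" for s z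
  proof -
    have em: "\<eta> s \<in> measurable \<mu>0' borel" unfolding measurable_cong_sets[OF sb' refl] using h1 that by auto
    have nu: "\<nu> s = distr \<mu>0' borel (\<eta> s)" using h1 that by auto
    have esm: "\<eta> s \<in> borel_measurable borel" using h1 that by auto
    have dm: "(\<lambda>y::'a. y - z) \<in> borel_measurable borel" by simp
    have Kzm: "(\<lambda>y. K2 (y - z)) \<in> borel_measurable borel"
      using measurable_compose[OF dm K2m] by (simp add: o_def)
    have Kzm2: "(\<lambda>y. K2 (\<eta> s y - z)) \<in> borel_measurable borel"
      using measurable_compose[OF esm Kzm] by (simp add: o_def)
    have "vel K2 (\<nu> s) z = - (LINT y|\<mu>0'. K2 (\<eta> s y - z))"
      unfolding vel_def nu by (simp add: integral_distr[OF em Kzm])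
    also have "\<dots> = - (LINT y|\<mu>0. K2 (\<eta> s (U y) - z))"
      unfolding \<mu>0'_def by (simp add: integral_distr[OF Um0 Kzm2])
    finally show ?thesis .
  qed
  have velB: "c *\<^sub>R vel K1 (\<mu> s) w = - (LINT y|\<mu>0. K2 (U (\<gamma> s y) - U w))" if "s \<in> {0..T}" for s w
  proof -
    have gm: "\<gamma> s \<in> measurable \<mu>0 borel" unfolding measurable_cong_sets[OF sb refl] using g1 that by auto
    have k: "c *\<^sub>R K1 v = K2 (U v)" for v
    proof -
      have e1: "c * real N powr (-\<alpha>) = real N powr (-\<alpha>')"
        unfolding c_def using assms(6) Npos by (simp add: powr_add[symmetric]) (simp add: algebra_simps)
      have e2: "(1 / real N powr \<beta>') * c = 1 / real N powr \<beta>"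
        unfolding c_def using Npos by (simp add: powr_diff)
      show ?thesis unfolding K1_def K2_def scaled_kernel_def U_def
        using e1 e2 by (simp add: mult.assoc[symmetric])
    qed
    have "c *\<^sub>R vel K1 (\<mu> s) w = - (LINT y|\<mu>0. c *\<^sub>R K1 (\<gamma> s y - w))"
    proof -
      have mu: "\<mu> s = distr \<mu>0 borel (\<gamma> s)" using g1 that by auto
      have dm: "(\<lambda>y::'a. y - w) \<in> borel_measurable borel" by simp
      have Kzm: "(\<lambda>y. K1 (y - w)) \<in> borel_measurable borel"
        using measurable_compose[OF dm K1m] by (simp add: o_def)
      show ?thesis unfolding vel_def mu by (simp add: integral_distr[OF gm Kzm])
    qed
    also have "\<dots> = - (LINT y|\<mu>0. K2 (U (\<gamma> s y) - U w))"
      unfolding k U_def by (simp add: scaleR_diff_right)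
    finally show ?thesis .
  qed
  have eqs: "\<eta> t (U x) = U (\<gamma> t x)" if t: "t \<in> {0..T}" for t x
  proof (rule uniq[where K=K2 and a="\<lambda>s x. \<eta> s (U x)" and b="\<lambda>s x. U (\<gamma> s x)"
        and p=U and T=T and t=t, OF K2lip K2b fm sb _ _ _ _ _ _ t])
    fix s assume s: "s \<in> {0..T}"
    show "(\<lambda>x. \<eta> s (U x)) \<in> borel_measurable borel"
      using h1 s Um by (auto intro: measurable_compose)
    show "(\<lambda>x. U (\<gamma> s x)) \<in> borel_measurable borel"
      using g1 s Um by (auto intro: measurable_compose)
  next
    fix t x assume t: "t \<in> {0..T}"
    have sub: "s \<in> {0..T}" if "s \<in> {0..t}" for s using that t by auto
    have ia0: "(\<lambda>s. vel K2 (\<nu> s) (\<eta> s (U x))) integrable_on {0..t}" using h2 t by blast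
    show "(\<lambda>s. - (LINT y|\<mu>0. K2 (\<eta> s (U y) - \<eta> s (U x)))) integrable_on {0..t}"
      by (rule integrable_eq[OF ia0]) (rule velA[OF sub])
    have "\<eta> t (U x) = U x + integral {0..t} (\<lambda>s. vel K2 (\<nu> s) (\<eta> s (U x)))" using h2 t by blast
    also have "integral {0..t} (\<lambda>s. vel K2 (\<nu> s) (\<eta> s (U x))) = integral {0..t} (\<lambda>s. - (LINT y|\<mu>0. K2 (\<eta> s (U y) - \<eta> s (U x))))"
      by (rule integral_cong) (rule velA[OF sub])
    finally show "\<eta> t (U x) = U x + integral {0..t} (\<lambda>s. - (LINT y|\<mu>0. K2 (\<eta> s (U y) - \<eta> s (U x))))" .
    have ib0: "(\<lambda>s. c *\<^sub>R vel K1 (\<mu> s) (\<gamma> s x)) integrable_on {0..t}"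
      using h2 g2 t by (intro integrable_cmul) blast
    show "(\<lambda>s. - (LINT y|\<mu>0. K2 (U (\<gamma> s y) - U (\<gamma> s x)))) integrable_on {0..t}"
      by (rule integrable_eq[OF ib0]) (rule velB[OF sub])
    have "U (\<gamma> t x) = c *\<^sub>R (x + integral {0..t} (\<lambda>s. vel K1 (\<mu> s) (\<gamma> s x)))"
      unfolding U_def using g2 t by metis
    also have "\<dots> = U x + integral {0..t} (\<lambda>s. c *\<^sub>R vel K1 (\<mu> s) (\<gamma> s x))"
      unfolding U_def by (simp add: scaleR_add_right)
    also have "integral {0..t} (\<lambda>s. c *\<^sub>R vel K1 (\<mu> s) (\<gamma> s x)) = integral {0..t} (\<lambda>s. - (LINT y|\<mu>0. K2 (U (\<gamma> s y) - U (\<gamma> s x))))"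
      by (rule integral_cong) (rule velB[OF sub])
    finally show "U (\<gamma> t x) = U x + integral {0..t} (\<lambda>s. - (LINT y|\<mu>0. K2 (U (\<gamma> s y) - U (\<gamma> s x))))" .
  qed
  show ?thesis
  proof
    fix t assume "t \<in> {0<..T}"
    then have t: "t \<in> {0..T}" by auto
    have em: "\<eta> t \<in> measurable \<mu>0' borel" unfolding measurable_cong_sets[OF sb' refl] using h1 t by auto
    have gm: "\<gamma> t \<in> measurable \<mu>0 borel" unfolding measurable_cong_sets[OF sb refl] using g1 t by auto
    have "\<nu> t = distr \<mu>0 borel (\<eta> t \<circ> U)"
      using h1 t unfolding \<mu>0'_def by (simp add: distr_distr[OF _ Um0] h1)
    also have "\<eta> t \<circ> U = U \<circ> \<gamma> t" using eqs[OF t] by (simp add: o_def)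
    also have "distr \<mu>0 borel (U \<circ> \<gamma> t) = distr (\<mu> t) borel U"
      using g1 t by (simp add: distr_distr[OF Um gm])
    finally show "\<nu> t = distr (\<mu> t) borel (\<lambda>z. real N powr (\<beta>' - \<beta>) *\<^sub>R z)"
      unfolding U_def c_def .
  qed
qed

end
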